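(* The trace of the matrix $X_{\frac{m}{n}}(q)$ has the following expression in terms of the corresponding $q$-rational: $$ \textup{Tr}\left(X_{\frac{m}{n}}(q)\right)=q\,\mathcal{N}_{\frac{m}{n}}(q)^2+\mathcal{D}_{\frac{m}{n}}(q)^2, $$ where $\mathcal{N}_{\frac{m}{n}}(q)$ and $\mathcal{D}_{\frac{m}{n}}(q)$ are the numerator and denominator of the $q$-deformed rational $\left[\frac{m}{n}\right]_q$.
   Context: Let $\frac{m}{n}>1$ be a rational number with continued fraction expansion $\frac{m}{n}=[a_1,a_2,\ldots,a_k]$, $a_i\geq 1$, where $k$ is odd. Let $$ R_q=\begin{pmatrix} q&1\\ 0&1\end{pmatrix},\qquad L_q=\begin{pmatrix} q&0\\ q&1\end{pmatrix},\qquad X_0=\begin{pmatrix}0&0\\0&1\end{pmatrix}. $$ Set $A_q:=R_q^{a_1}L_q^{a_2}R_q^{a_3}L_q^{a_4}\cdots R_q^{a_k}$ and $A_q^T:=L_q^{a_k}R_q^{a_{k-1}}L_q^{a_{k-2}}\cdots L_q^{a_1}$ (the $q$-deformed transpose of $A_q$, not the ordinary transpose), and define $X_{\frac{m}{n}}(q):=A_q\,X_0\,A_q^T$. The $q$-deformed rational is $\left[\frac{m}{n}\right]_q=A_q\left(\frac{0}{1}\right)=\frac{\mathcal{N}_{\frac{m}{n}}(q)}{\mathcal{D}_{\frac{m}{n}}(q)}$ (action by fractional-linear transformations), with $\mathcal{N}_{\frac{m}{n}}$, $\mathcal{D}_{\frac{m}{n}}$ polynomials in $q$; equivalently the second column of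 $A_q$ is $(\mathcal{N}_{\frac{m}{n}}(q),\mathcal{D}_{\frac{m}{n}}(q))^T$ and the second row of $A_q^T$ is $(q\mathcal{N}_{\frac{m}{n}}(q),\mathcal{D}_{\frac{m}{n}}(q))$. *)

theory Defs
  imports "Jordan_Normal_Form.Matrix" "HOL-Computational_Algebra.Polynomial"
begin

definition qvar :: "int poly" where "qvar = [:0, 1:]"

definition Rq :: "int poly mat" where
  "Rq = mat_of_rows_list 2 [[qvar, 1], [0, 1]]"

definition Lq :: "int poly mat" where
  "Lq = mat_of_rows_list 2 [[qvar, 0], [qvar, 1]]"

definition X0 :: "int poly mat" where
  "X0 = mat_of_rows_list 2 [[0, 0], [0, 1]]"

fun cf_value :: "nat list \<Rightarrow> rat" where
  "cf_value [] = 0"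
| "cf_value [a] = of_nat a"
| "cf_value (a # as) = of_nat a + 1 / cf_value as"

text \<open>A_q = R^a1 L^a2 R^a3 ... (the list index i is 0-based, so a_(i+1) = as ! i).\<close>
definition A_q :: "nat list \<Rightarrow> int poly mat" where
  "A_q as = foldr (*) (map (\<lambda>i. (if even i then Rq else Lq) ^\<^sub>m (as ! i)) [0..<length as]) (1\<^sub>m 2)"

text \<open>q-deformed transpose: A_q^T = L^ak R^a(k-1) L^a(k-2) ... L^a1 (k odd),
  i.e. the factors in reversed order with R and L exchanged.\<close>
definition A_qT :: "nat list \<Rightarrow> int poly mat" where
  "A_qT as = foldr (*) (map (\<lambda>i. (if even i then Lq else Rq) ^\<^sub>m (as ! i)) (rev [0..<length as])) (1\<^sub>m 2)"

definition X_q :: "nat list \<Rightarrow> int poly mat" where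
  "X_q as = A_q as * X0 * A_qT as"

text \<open>Numerator and denominator of [m/n]_q = A_q(0/1): the second column of A_q.\<close>
definition qN :: "nat list \<Rightarrow> int poly" where "qN as = A_q as $$ (0, 1)"
definition qD :: "nat list \<Rightarrow> int poly" where "qD as = A_q as $$ (1, 1)"

definition trace2 :: "'a::plus mat \<Rightarrow> 'a" where
  "trace2 M = M $$ (0, 0) + M $$ (1, 1)"

end

theory Submission
  imports Defs
begin
definition Sq :: "int poly mat" where
  "Sq = mat_of_rows_list 2 [[1, 0], [0, qvar]]"

lemma Rq_c[simp]: "Rq \<in> carrier_mat 2 2" unfolding Rq_def mat_of_rows_list_def carrier_mat_def by simp
lemma Lq_c[simp]: "Lq \<in> carrier_mat 2 2" unfolding Lq_def mat_of_rows_list_def carrier_mat_def by simp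
lemma Sq_c[simp]: "Sq \<in> carrier_mat 2 2" unfolding Sq_def mat_of_rows_list_def carrier_mat_def by simp
lemma X0_c[simp]: "X0 \<in> carrier_mat 2 2" unfolding X0_def mat_of_rows_list_def carrier_mat_def by simp

lemma ent[simp]:
  "Rq $$ (0,0) = qvar" "Rq $$ (0,1) = 1" "Rq $$ (1,0) = 0" "Rq $$ (1,1) = 1"
  "Lq $$ (0,0) = qvar" "Lq $$ (0,1) = 0" "Lq $$ (1,0) = qvar" "Lq $$ (1,1) = 1"
  "Sq $$ (0,0) = 1" "Sq $$ (0,1) = 0" "Sq $$ (1,0) = 0" "Sq $$ (1,1) = qvar"
  "X0 $$ (0,0) = 0" "X0 $$ (0,1) = 0" "X0 $$ (1,0) = 0" "X0 $$ (1,1) = 1"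
  "Rq $$ (0,Suc 0) = 1" "Rq $$ (Suc 0,0) = 0" "Rq $$ (Suc 0,Suc 0) = 1"
  "Lq $$ (0,Suc 0) = 0" "Lq $$ (Suc 0,0) = qvar" "Lq $$ (Suc 0,Suc 0) = 1"
  "Sq $$ (0,Suc 0) = 0" "Sq $$ (Suc 0,0) = 0" "Sq $$ (Suc 0,Suc 0) = qvar"
  "X0 $$ (0,Suc 0) = 0" "X0 $$ (Suc 0,0) = 0" "X0 $$ (Suc 0,Suc 0) = 1"
  unfolding Rq_def Lq_def Sq_def X0_def mat_of_rows_list_def by (simp_all add: numeral_2_eq_2)

lemma mult2: "A \<in> carrier_mat 2 2 \<Longrightarrow> B \<in> carrier_mat 2 2 \<Longrightarrow> i < 2 \<Longrightarrow> j < 2 \<Longrightarrow>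
  (A * B) $$ (i,j) = A $$ (i,0) * B $$ (0,j) + A $$ (i,1) * B $$ (1,j)"
proof -
  assume a: "A \<in> carrier_mat 2 2" "B \<in> carrier_mat 2 2" "i < 2" "j < 2"
  have "(A * B) $$ (i,j) = row A i \<bullet> col B j" using a by (intro index_mult_mat(1)) auto
  also have "\<dots> = (\<Sum>k\<in>{0..<2}. A $$ (i,k) * B $$ (k,j))"
    using a unfolding scalar_prod_def by (intro sum.cong) auto
  also have "\<dots> = A $$ (i,0) * B $$ (0,j) + A $$ (i,1) * B $$ (1,j)"
    by (simp add: numeral_2_eq_2)
  finally show ?thesis .
qed

lemma mc22[simp]: "A \<in> carrier_mat 2 2 \<Longrightarrow> B \<in> carrier_mat 2 2 \<Longrightarrow> A * B \<in> carrier_mat 2 2"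
  by (rule mult_carrier_mat)

lemma tc22[simp]: "A \<in> carrier_mat 2 2 \<Longrightarrow> transpose_mat A \<in> carrier_mat 2 2"
  by simp

lemma tr2: "A \<in> carrier_mat 2 2 \<Longrightarrow> i < 2 \<Longrightarrow> j < 2 \<Longrightarrow> transpose_mat A $$ (i,j) = A $$ (j,i)"
  by simp

lemma mat2_eq: "A \<in> carrier_mat 2 2 \<Longrightarrow> B \<in> carrier_mat 2 2 \<Longrightarrow>
   A $$ (0,0) = B $$ (0,0) \<Longrightarrow> A $$ (0,1) = B $$ (0,1) \<Longrightarrow> A $$ (1,0) = B $$ (1,0) \<Longrightarrow> A $$ (1,1) = B $$ (1,1) \<Longrightarrow> A = B"
proof -
  assume a: "A \<in> carrier_mat 2 2" "B \<in> carrier_mat 2 2" "A $$ (0,0) = B $$ (0,0)" "A $$ (0,1) = B $$ (0,1)" "A $$ (1,0) = B $$ (1,0)" "A $$ (1,1) = B $$ (1,1)"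
  show "A = B"
  proof (rule eq_matI)
    fix i j assume ij: "i < dim_row B" "j < dim_col B"
    then have "i = 0 \<or> i = 1" "j = 0 \<or> j = 1" using a(2) by auto
    then show "A $$ (i,j) = B $$ (i,j)" using a by auto
  qed (use a in auto)
qed

lemma foldr_c: "\<forall>M\<in>set Ms. M \<in> carrier_mat 2 2 \<Longrightarrow> foldr (*) Ms (1\<^sub>m 2) \<in> carrier_mat 2 2"
  by (induction Ms) auto

lemma LR: "Lq * Sq = Sq * transpose_mat Rq"
  by (rule mat2_eq) (simp_all add: mult2 tr2)

lemma RL: "Rq * Sq = Sq * transpose_mat Lq"
  by (rule mat2_eq) (simp_all add: mult2 tr2)

lemma pow_comm:
  assumes cM: "M \<in> carrier_mat 2 2"
  shows "M * M ^\<^sub>m k = M ^\<^sub>m Suc k"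
proof (induction k)
  case 0 then show ?case using cM by simp
next
  case (Suc k)
  have c: "M ^\<^sub>m k \<in> carrier_mat 2 2" using cM by simp
  have "M * M ^\<^sub>m Suc k = M * (M ^\<^sub>m k * M)" by simp
  also have "\<dots> = (M * M ^\<^sub>m k) * M" by (rule assoc_mult_mat[OF cM c cM, symmetric])
  also have "\<dots> = M ^\<^sub>m Suc k * M" by (simp only: Suc)
  finally show ?case by simp
qed

lemma pow_rel:
  assumes cM: "M \<in> carrier_mat 2 2" and cN: "N \<in> carrier_mat 2 2" and r: "N * Sq = Sq * transpose_mat M"
  shows "N ^\<^sub>m k * Sq = Sq * transpose_mat (M ^\<^sub>m k)"
proof (induction k)
  case 0 then show ?case using cM cN by (simp add: left_mult_one_mat[OF Sq_c] right_mult_one_mat[OF Sq_c])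
next
  case (Suc k)
  have c1: "N ^\<^sub>m k \<in> carrier_mat 2 2" "M ^\<^sub>m k \<in> carrier_mat 2 2"
    using cM cN by (simp_all add: pow_carrier_mat)
  have c2: "transpose_mat M \<in> carrier_mat 2 2" "transpose_mat (M ^\<^sub>m k) \<in> carrier_mat 2 2"
    using cM c1 by simp_all
  have "N ^\<^sub>m Suc k * Sq = (N ^\<^sub>m k * N) * Sq" by simp
  also have "\<dots> = N ^\<^sub>m k * (N * Sq)"
    by (rule assoc_mult_mat[OF c1(1) cN Sq_c])
  also have "\<dots> = N ^\<^sub>m k * (Sq * transpose_mat M)" by (simp only: r)
  also have "\<dots> = (N ^\<^sub>m k * Sq) * transpose_mat M"
    by (rule assoc_mult_mat[OF c1(1) Sq_c c2(1), symmetric])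
  also have "\<dots> = (Sq * transpose_mat (M ^\<^sub>m k)) * transpose_mat M" by (simp only: Suc)
  also have "\<dots> = Sq * (transpose_mat (M ^\<^sub>m k) * transpose_mat M)"
    by (rule assoc_mult_mat[OF Sq_c c2(2) c2(1)])
  also have "transpose_mat (M ^\<^sub>m k) * transpose_mat M = transpose_mat (M * M ^\<^sub>m k)"
    by (rule transpose_mult[OF cM c1(2), symmetric])
  also have "M * M ^\<^sub>m k = M ^\<^sub>m Suc k"
    by (rule pow_comm[OF cM])
  finally show ?case .
qed


lemma foldr_N:
  fixes N :: "int poly mat"
  assumes n: "N \<in> carrier_mat 2 2"
  shows "\<forall>y\<in>set L. y \<in> carrier_mat 2 2 \<Longrightarrow> foldr (*) L N = foldr (*) L (1\<^sub>m 2) * N"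
proof (induction L)
  case Nil then show ?case using left_mult_one_mat[OF n] by simp
next
  case (Cons y L)
  then have cy: "y \<in> carrier_mat 2 2" and cL: "foldr (*) L (1\<^sub>m 2) \<in> carrier_mat 2 2" using foldr_c by auto
  have "foldr (*) (y # L) N = y * (foldr (*) L (1\<^sub>m 2) * N)" using Cons by simp
  also have "\<dots> = (y * foldr (*) L (1\<^sub>m 2)) * N" by (rule assoc_mult_mat[OF cy cL n, symmetric])
  finally show ?case by simp
qed

lemma la2_set:
  "list_all2 (\<lambda>M N. M \<in> carrier_mat 2 2 \<and> N \<in> carrier_mat 2 2 \<and> P M N) Ms Ns
   \<Longrightarrow> (\<forall>y\<in>set Ms. y \<in> carrier_mat 2 2) \<and> (\<forall>y\<in>set Ns. y \<in> carrier_mat 2 2)"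
  by (induction Ms Ns rule: list_all2_induct) auto

lemma prod_rel:
  "list_all2 (\<lambda>M N. M \<in> carrier_mat 2 2 \<and> N \<in> carrier_mat 2 2 \<and> N * Sq = Sq * transpose_mat M) Ms Ns
   \<Longrightarrow> foldr (*) (rev Ns) (1\<^sub>m 2) * Sq = Sq * transpose_mat (foldr (*) Ms (1\<^sub>m 2))"
proof (induction Ms Ns rule: list_all2_induct)
  case Nil then show ?case by (simp add: left_mult_one_mat[OF Sq_c] right_mult_one_mat[OF Sq_c])
next
  case (Cons M Ms N Ns)
  have cM: "foldr (*) Ms (1\<^sub>m 2) \<in> carrier_mat 2 2"
    using la2_set[OF Cons(2)] by (intro foldr_c) simp
  have cN: "foldr (*) (rev Ns) (1\<^sub>m 2) \<in> carrier_mat 2 2"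
    using la2_set[OF Cons(2)] by (intro foldr_c) simp
  have m: "M \<in> carrier_mat 2 2" and n: "N \<in> carrier_mat 2 2" and r: "N * Sq = Sq * transpose_mat M"
    using Cons(1) by auto
  have tM: "transpose_mat M \<in> carrier_mat 2 2" "transpose_mat (foldr (*) Ms (1\<^sub>m 2)) \<in> carrier_mat 2 2"
    using m cM by simp_all
  have f: "foldr (*) (rev (N # Ns)) (1\<^sub>m 2) = foldr (*) (rev Ns) (1\<^sub>m 2) * N"
  proof -
    have "foldr (*) (rev (N # Ns)) (1\<^sub>m 2) = foldr (*) (rev Ns) (N * 1\<^sub>m 2)"
      by (simp add: foldr_append)
    also have "N * 1\<^sub>m 2 = N" using n by simp
    also have "foldr (*) (rev Ns) N = foldr (*) (rev Ns) (1\<^sub>m 2) * N"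
      using la2_set[OF Cons(2)] by (intro foldr_N[OF n]) simp
    finally show ?thesis .
  qed
  have "foldr (*) (rev (N # Ns)) (1\<^sub>m 2) * Sq = (foldr (*) (rev Ns) (1\<^sub>m 2) * N) * Sq"
    by (simp only: f)
  also have "\<dots> = foldr (*) (rev Ns) (1\<^sub>m 2) * (N * Sq)"
    by (rule assoc_mult_mat[OF cN n Sq_c])
  also have "\<dots> = foldr (*) (rev Ns) (1\<^sub>m 2) * (Sq * transpose_mat M)" by (simp only: r)
  also have "\<dots> = (foldr (*) (rev Ns) (1\<^sub>m 2) * Sq) * transpose_mat M"
    by (rule assoc_mult_mat[OF cN Sq_c tM(1), symmetric])
  also have "\<dots> = (Sq * transpose_mat (foldr (*) Ms (1\<^sub>m 2))) * transpose_mat M" by (simp only: Cons(3))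
  also have "\<dots> = Sq * (transpose_mat (foldr (*) Ms (1\<^sub>m 2)) * transpose_mat M)"
    by (rule assoc_mult_mat[OF Sq_c tM(2) tM(1)])
  also have "transpose_mat (foldr (*) Ms (1\<^sub>m 2)) * transpose_mat M = transpose_mat (M * foldr (*) Ms (1\<^sub>m 2))"
    by (rule transpose_mult[OF m cM, symmetric])
  finally show ?case by simp
qed

lemma AT_rel: "A_qT as * Sq = Sq * transpose_mat (A_q as)"
proof -
  define g where "g = (\<lambda>i. (if even i then Rq else Lq) ^\<^sub>m (as ! i))"
  define h where "h = (\<lambda>i. (if even i then Lq else Rq) ^\<^sub>m (as ! i))"
  have 1: "A_qT as = foldr (*) (rev (map h [0..<length as])) (1\<^sub>m 2)"
    unfolding A_qT_def h_def by (simp only: rev_map)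
  have 2: "A_q as = foldr (*) (map g [0..<length as]) (1\<^sub>m 2)"
    unfolding A_q_def g_def by (rule refl)
  have gh: "g i \<in> carrier_mat 2 2 \<and> h i \<in> carrier_mat 2 2 \<and> h i * Sq = Sq * transpose_mat (g i)" for i
  proof (cases "even i")
    case True
    then show ?thesis unfolding g_def h_def using pow_rel[OF Rq_c Lq_c LR] by simp
  next
    case False
    then show ?thesis unfolding g_def h_def using pow_rel[OF Lq_c Rq_c RL] by simp
  qed
  have "list_all2 (\<lambda>M N. M \<in> carrier_mat 2 2 \<and> N \<in> carrier_mat 2 2 \<and> N * Sq = Sq * transpose_mat M)
     (map g [0..<length as]) (map h [0..<length as])"
    by (simp add: list_all2_map1 list_all2_map2 list_all2_same gh)
  from prod_rel[OF this] show ?thesis unfolding 1 2 .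
qed

theorem proposition1:
  fixes m n :: nat and as :: "nat list"
  assumes "n > 0" and "of_nat m / of_nat n > (1::rat)"
    and "\<forall>a \<in> set as. a \<ge> 1"
    and "odd (length as)"
    and "cf_value as = of_nat m / of_nat n"
  shows "trace2 (X_q as) = qvar * (qN as)^2 + (qD as)^2"
proof -
  have cA: "A_q as \<in> carrier_mat 2 2" unfolding A_q_def by (intro foldr_c) auto
  have cT: "A_qT as \<in> carrier_mat 2 2" unfolding A_qT_def by (intro foldr_c) auto
  have e: "(A_qT as * Sq) $$ (i,j) = (Sq * transpose_mat (A_q as)) $$ (i,j)" for i j
    using AT_rel by simp
  have q0: "qvar \<noteq> 0" by (simp add: qvar_def)
  have t10: "A_qT as $$ (1,0) = qvar * qN as"
    using e[of 1 0] cA cT by (simp add: mult2 qN_def)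
  have "A_qT as $$ (1,1) * qvar = qvar * qD as"
    using e[of 1 1] cA cT by (simp add: mult2 qD_def)
  then have t11: "A_qT as $$ (1,1) = qD as" using q0 by (simp add: mult.commute)
  have "trace2 (X_q as) = (A_q as * X0 * A_qT as) $$ (0,0) + (A_q as * X0 * A_qT as) $$ (1,1)"
    by (simp add: trace2_def X_q_def)
  also have "\<dots> = qN as * A_qT as $$ (1,0) + qD as * A_qT as $$ (1,1)"
  proof -
    have cAX: "A_q as * X0 \<in> carrier_mat 2 2" using cA by simp
    have x: "(A_q as * X0) $$ (i,0) = 0" "(A_q as * X0) $$ (i,1) = A_q as $$ (i,1)" if "i < 2" for i
      using that by (simp_all add: mult2[OF cA X0_c])
    have "(A_q as * X0 * A_qT as) $$ (0,0) = (A_q as * X0) $$ (0,0) * A_qT as $$ (0,0) + (A_q as * X0) $$ (0,1) * A_qT as $$ (1,0)"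
      by (rule mult2[OF cAX cT]) simp_all
    moreover have "(A_q as * X0 * A_qT as) $$ (1,1) = (A_q as * X0) $$ (1,0) * A_qT as $$ (0,1) + (A_q as * X0) $$ (1,1) * A_qT as $$ (1,1)"
      by (rule mult2[OF cAX cT]) simp_all
    ultimately show ?thesis using x[of 0] x[of 1] by (simp add: qN_def qD_def)
  qed
  finally show ?thesis using t10 t11 by (simp add: power2_eq_square algebra_simps)
qed

end
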